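(* Under the setting below, let $(x^*,z^*,s^* )$ with multiplier $\lambda^*$ for (C) (and nonnegative multipliers for the other constraints) be a KKT point of (P). Then for every $t$ with $(\beta_t,\theta_t)\in\Omega^{II}_t(\lambda^* )$ we have $(x_t^*,z_t^* )=(1,z^{II}_t(\lambda^* ))$, where $z^{II}_t(\lambda)=1-a_t(\beta_t,\lambda)$ and $\Omega^{II}_t(\lambda)=\Big\{(\beta,\theta):\beta>0,\ \theta>\frac{X_t(\lambda)}{u_t'(1)},\ \beta\ge\frac{p_tc_t+r_t\lambda}{c_te_t'(c_t)}\Big\}$.
   Context: Fix an integer $T\ge 1$, a data cap $Q>0$ and an overage fee $\pi>0$. For each $t\in\{1,\dots,T\}$ fix reals $d_t\ge 0$, $r_t\ge 0$, $c_t>0$, $p_t>0$, $\theta_t>0$, $\beta_t>0$ and functions $u_t,e_t:[0,\infty)\to\mathbb{R}$ such that: $u_t$ is continuous, increasing and strictly concave, differentiable on $(0,\infty)$, and $u_t':(0,\infty)\to(0,\infty)$ is a strictly decreasing bijection with inverse $u_t'^{-1}$; $e_t$ is increasing, strictly convex and continuously differentiable, and $e_t':[0,\infty)\to[0,\infty)$ is a strictly increasing bijection with inverse $e_t'^{-1}$. For $0\le z\le x\le 1$ let $\tilde f_t(x,z)=\theta_t u_t(x)-\beta_t e_t((x-z)c_t)-p_t c_t z$ and $\tilde h_t(x,z)=d_t x+r_t z$. Problem (P): maximize $\sum_{t=1}^T \tilde f_t(x_t,z_t)-\pi s$ over $x,z\in\mathbb{R}^T$, $s\in\mathbb{R}$,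 subject to $0\le z_t\le x_t\le 1$ for all $t$, $s\ge 0$, and (C): $s\ge \sum_{t=1}^T\tilde h_t(x_t,z_t)-Q$. A KKT point of (P) consists of a feasible $(x^*,z^*,s^* )$ and nonnegative Lagrange multipliers for all constraints satisfying stationarity of the Lagrangian and complementary slackness; $\lambda^*$ denotes the multiplier of (C) (the shadow price of wireless data). For $\lambda\ge 0$ and $\beta>0$ write $a_t(\beta,\lambda)=\frac{1}{c_t}\,e_t'^{-1}\!\Big(\frac{p_tc_t+r_t\lambda}{\beta c_t}\Big)$ and $X_t(\lambda)=p_tc_t+(d_t+r_t)\lambda$. *)

theory Defs
  imports "HOL-Analysis.Analysis"
begin

definition strictly_convex_on :: "real set \<Rightarrow> (real \<Rightarrow> real) \<Rightarrow> bool" where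
  "strictly_convex_on S f \<longleftrightarrow>
     (\<forall>x\<in>S. \<forall>y\<in>S. x \<noteq> y \<longrightarrow> (\<forall>w::real. 0 < w \<and> w < 1 \<longrightarrow>
        f ((1 - w) * x + w * y) < (1 - w) * f x + w * f y))"

definition strictly_concave_on :: "real set \<Rightarrow> (real \<Rightarrow> real) \<Rightarrow> bool" where
  "strictly_concave_on S f \<longleftrightarrow> strictly_convex_on S (\<lambda>x. - f x)"

definition period_data ::
  "(real \<Rightarrow> real) \<Rightarrow> (real \<Rightarrow> real) \<Rightarrow> (real \<Rightarrow> real) \<Rightarrow> (real \<Rightarrow> real) \<Rightarrow>
   real \<Rightarrow> real \<Rightarrow> real \<Rightarrow> real \<Rightarrow> real \<Rightarrow> real \<Rightarrow> bool" where
  "period_data u up e ep d r c p \<theta> \<beta> \<longleftrightarrow>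
     d \<ge> 0 \<and> r \<ge> 0 \<and> c > 0 \<and> p > 0 \<and> \<theta> > 0 \<and> \<beta> > 0 \<and>
     continuous_on {0..} u \<and> mono_on {0..} u \<and> strictly_concave_on {0..} u \<and>
     (\<forall>y>0. (u has_real_derivative up y) (at y)) \<and>
     (\<forall>y>0. \<forall>y'>y. up y' < up y) \<and> bij_betw up {0<..} {0<..} \<and>
     mono_on {0..} e \<and> strictly_convex_on {0..} e \<and>
     (\<forall>y\<ge>0. (e has_real_derivative ep y) (at y within {0..})) \<and>
     continuous_on {0..} ep \<and>
     strict_mono_on {0..} ep \<and> bij_betw ep {0..} {0..}"

definition a_fun :: "(real \<Rightarrow> real) \<Rightarrow> real \<Rightarrow> real \<Rightarrow> real \<Rightarrow> real \<Rightarrow> real \<Rightarrow> real" where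
  "a_fun ep c p r \<beta> lam = (1 / c) * the_inv_into {0..} ep ((p * c + r * lam) / (\<beta> * c))"

definition X_fun :: "real \<Rightarrow> real \<Rightarrow> real \<Rightarrow> real \<Rightarrow> real \<Rightarrow> real" where
  "X_fun c p d r lam = p * c + (d + r) * lam"

definition z_II :: "(real \<Rightarrow> real) \<Rightarrow> real \<Rightarrow> real \<Rightarrow> real \<Rightarrow> real \<Rightarrow> real \<Rightarrow> real" where
  "z_II ep c p r \<beta> lam = 1 - a_fun ep c p r \<beta> lam"

definition Omega_II ::
  "(real \<Rightarrow> real) \<Rightarrow> (real \<Rightarrow> real) \<Rightarrow> real \<Rightarrow> real \<Rightarrow> real \<Rightarrow> real \<Rightarrow> real \<Rightarrow> (real \<times> real) set" where
  "Omega_II up ep c p d r lam =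
     {(\<beta>, \<theta>). \<beta> > 0 \<and> \<theta> > X_fun c p d r lam / up 1 \<and> \<beta> \<ge> (p * c + r * lam) / (c * ep c)}"

text \<open>KKT point of problem (P), with the Lagrangian
  L = sum_t f_t - pi s + sum_t mu1_t z_t + sum_t mu2_t (x_t - z_t) + sum_t mu3_t (1 - x_t)
      + nu s + lambda (s - sum_t h_t + Q).
  Stationarity requires the (one-sided, relative to the domain [0,inf)) derivative of u_t
  at x_t to exist.\<close>
definition KKT_point ::
  "nat \<Rightarrow> real \<Rightarrow> real \<Rightarrow> (nat \<Rightarrow> real \<Rightarrow> real) \<Rightarrow> (nat \<Rightarrow> real \<Rightarrow> real) \<Rightarrow>
   (nat \<Rightarrow> real) \<Rightarrow> (nat \<Rightarrow> real) \<Rightarrow> (nat \<Rightarrow> real) \<Rightarrow> (nat \<Rightarrow> real) \<Rightarrow>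
   (nat \<Rightarrow> real) \<Rightarrow> (nat \<Rightarrow> real) \<Rightarrow>
   (nat \<Rightarrow> real) \<Rightarrow> (nat \<Rightarrow> real) \<Rightarrow> real \<Rightarrow>
   (nat \<Rightarrow> real) \<Rightarrow> (nat \<Rightarrow> real) \<Rightarrow> (nat \<Rightarrow> real) \<Rightarrow> real \<Rightarrow> real \<Rightarrow> bool" where
  "KKT_point T Q \<pi> u ep d r c p \<theta> \<beta> x z s \<mu>1 \<mu>2 \<mu>3 \<nu> lam \<longleftrightarrow>
     \<comment> \<open>feasibility\<close>
     (\<forall>t\<in>{1..T}. 0 \<le> z t \<and> z t \<le> x t \<and> x t \<le> 1) \<and> s \<ge> 0 \<and>
     s \<ge> (\<Sum>t=1..T. d t * x t + r t * z t) - Q \<and>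
     \<comment> \<open>nonnegative multipliers\<close>
     (\<forall>t\<in>{1..T}. \<mu>1 t \<ge> 0 \<and> \<mu>2 t \<ge> 0 \<and> \<mu>3 t \<ge> 0) \<and> \<nu> \<ge> 0 \<and> lam \<ge> 0 \<and>
     \<comment> \<open>stationarity\<close>
     (\<forall>t\<in>{1..T}. \<exists>Du. (u t has_real_derivative Du) (at (x t) within {0..}) \<and>
        \<theta> t * Du - \<beta> t * ep t ((x t - z t) * c t) * c t + \<mu>2 t - \<mu>3 t - lam * d t = 0 \<and>
        \<beta> t * ep t ((x t - z t) * c t) * c t - p t * c t + \<mu>1 t - \<mu>2 t - lam * r t = 0) \<and>
     - \<pi> + \<nu> + lam = 0 \<and>
     \<comment> \<open>complementary slackness\<close>
     (\<forall>t\<in>{1..T}. \<mu>1 t * z t = 0 \<and> \<mu>2 t * (x t - z t) = 0 \<and> \<mu>3 t * (1 - x t) = 0) \<and>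
     \<nu> * s = 0 \<and> lam * (s - ((\<Sum>t=1..T. d t * x t + r t * z t) - Q)) = 0"

end

theory Submission
  imports Defs
begin

lemma deriv_ge_chord:
  fixes u :: "real \<Rightarrow> real"
  assumes conc: "strictly_concave_on {0..} u"
    and x0: "0 \<le> x" and x1: "x < 1"
    and D: "(u has_real_derivative D) (at x within {0..})"
  shows "D \<ge> (u 1 - u x) / (1 - x)"
proof -
  let ?q = "\<lambda>y. (u y - u x) / (y - x)"
  have "(?q \<longlongrightarrow> D) (at x within {0..})"
    using D by (simp add: has_field_derivative_iff)
  hence lim: "(?q \<longlongrightarrow> D) (at_right x)"
    by (rule tendsto_within_subset) (use x0 in auto)
  have ev: "eventually (\<lambda>y. ?q y \<ge> (u 1 - u x) / (1 - x)) (at_right x)"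
  proof -
    have "eventually (\<lambda>y. y < 1) (at_right x)"
      using eventually_at_right_real[OF x1] by (rule eventually_mono) auto
    moreover have "eventually (\<lambda>y. y > x) (at_right x)"
      by (simp add: eventually_at_filter)
    ultimately show ?thesis
    proof eventually_elim
      case (elim y)
      define w where "w = (y - x) / (1 - x)"
      have w0: "0 < w" and w1: "w < 1" using elim x1 by (auto simp: w_def field_simps)
      have wx: "w * (1 - x) = y - x" using x1 by (simp add: w_def)
      have yw: "(1 - w) * x + w * 1 = y" using wx by (simp add: algebra_simps)
      have "- u ((1 - w) * x + w * 1) < (1 - w) * (- u x) + w * (- u 1)"
        using conc[unfolded strictly_concave_on_def strictly_convex_on_def, rule_format, of x 1 w]
          x0 x1 w0 w1 by simp
      hence "u y - u x > w * (u 1 - u x)" using yw by (simp add: algebra_simps)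
      hence "u y - u x \<ge> (y - x) * ((u 1 - u x) / (1 - x))"
        by (simp add: w_def)
      thus ?case using elim by (simp add: field_simps)
    qed
  qed
  show ?thesis
    by (rule tendsto_lowerbound[OF lim ev]) simp
qed

theorem lemma2:
  fixes T :: nat and Q \<pi> :: real
    and u up e ep :: "nat \<Rightarrow> real \<Rightarrow> real"
    and d r c p \<theta> \<beta> :: "nat \<Rightarrow> real"
    and x z \<mu>1 \<mu>2 \<mu>3 :: "nat \<Rightarrow> real" and s \<nu> lam :: real
  assumes "T \<ge> 1" and "Q > 0" and "\<pi> > 0"
    and "\<forall>t\<in>{1..T}. period_data (u t) (up t) (e t) (ep t) (d t) (r t) (c t) (p t) (\<theta> t) (\<beta> t)"
    and "KKT_point T Q \<pi> u ep d r c p \<theta> \<beta> x z s \<mu>1 \<mu>2 \<mu>3 \<nu> lam"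
    and "t \<in> {1..T}"
    and "(\<beta> t, \<theta> t) \<in> Omega_II (up t) (ep t) (c t) (p t) (d t) (r t) lam"
  shows "x t = 1 \<and> z t = z_II (ep t) (c t) (p t) (r t) (\<beta> t) lam"
proof -
  note tT = assms(6)
  have pd: "period_data (u t) (up t) (e t) (ep t) (d t) (r t) (c t) (p t) (\<theta> t) (\<beta> t)"
    using assms(4) tT by blast
  have d0: "d t \<ge> 0" and r0: "r t \<ge> 0" and c0: "c t > 0" and p0: "p t > 0"
    and th0: "\<theta> t > 0" and be0: "\<beta> t > 0"
    and ucont: "continuous_on {0..} (u t)" and conc: "strictly_concave_on {0..} (u t)"
    and uder: "\<forall>y>0. (u t has_real_derivative up t y) (at y)"
    and updec: "\<forall>y>0. \<forall>y'>y. up t y' < up t y"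
    and upbij: "bij_betw (up t) {0<..} {0<..}"
    and epmono: "strict_mono_on {0..} (ep t)" and epbij: "bij_betw (ep t) {0..} {0..}"
    using pd unfolding period_data_def by auto
  have K: "KKT_point T Q \<pi> u ep d r c p \<theta> \<beta> x z s \<mu>1 \<mu>2 \<mu>3 \<nu> lam" by (rule assms(5))
  have feas: "0 \<le> z t" "z t \<le> x t" "x t \<le> 1" using K tT unfolding KKT_point_def by auto
  have mus: "\<mu>1 t \<ge> 0" "\<mu>2 t \<ge> 0" "\<mu>3 t \<ge> 0" and lam0: "lam \<ge> 0"
    using K tT unfolding KKT_point_def by auto
  obtain Du where Du: "(u t has_real_derivative Du) (at (x t) within {0..})"
    and st1: "\<theta> t * Du - \<beta> t * ep t ((x t - z t) * c t) * c t + \<mu>2 t - \<mu>3 t - lam * d t = 0"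
    and st2: "\<beta> t * ep t ((x t - z t) * c t) * c t - p t * c t + \<mu>1 t - \<mu>2 t - lam * r t = 0"
    using K tT unfolding KKT_point_def by blast
  have cs: "\<mu>1 t * z t = 0" "\<mu>2 t * (x t - z t) = 0" "\<mu>3 t * (1 - x t) = 0"
    using K tT unfolding KKT_point_def by auto
  have om: "\<theta> t > X_fun (c t) (p t) (d t) (r t) lam / up t 1"
    "\<beta> t \<ge> (p t * c t + r t * lam) / (c t * ep t (c t))"
    using assms(7) unfolding Omega_II_def by auto
  have up1: "up t 1 > 0" using upbij unfolding bij_betw_def by auto
  have thup: "\<theta> t * up t 1 > p t * c t + (d t + r t) * lam"
    using om(1) up1 by (simp add: X_fun_def pos_divide_less_eq)
  have ep0: "ep t 0 = 0"
  proof -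
    obtain y where y: "y \<ge> 0" "ep t y = 0" using epbij unfolding bij_betw_def
      by (metis atLeast_iff imageE order_refl)
    have "ep t 0 \<ge> 0" using epbij unfolding bij_betw_def by auto
    moreover have "ep t 0 < ep t y" if "y > 0"
      using epmono[unfolded strict_mono_on_def, rule_format, of 0 y] that by simp
    ultimately show ?thesis using y by force
  qed
  have epc: "ep t (c t) > 0"
    using epmono c0 ep0 unfolding strict_mono_on_def by (metis atLeast_iff less_eq_real_def order_refl)
  have x1: "x t = 1"
  proof (rule ccontr)
    assume "x t \<noteq> 1"
    hence xl: "x t < 1" using feas by auto
    hence m3: "\<mu>3 t = 0" using cs(3) by simp
    have x0: "0 \<le> x t" using feas by simp
    have ch: "Du \<ge> (u t 1 - u t (x t)) / (1 - x t)"
      by (rule deriv_ge_chord[OF conc x0 xl Du])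
    obtain l \<xi> where xi: "x t < \<xi>" "\<xi> < 1" "DERIV (u t) \<xi> :> l"
      "u t 1 - u t (x t) = (1 - x t) * l"
    proof -
      have "continuous_on {x t..1} (u t)"
        by (rule continuous_on_subset[OF ucont]) (use x0 in auto)
      moreover have "\<And>y. x t < y \<Longrightarrow> y < 1 \<Longrightarrow> u t differentiable (at y)"
        using uder x0 by (meson le_less_trans real_differentiable_def)
      ultimately show ?thesis using MVT[OF xl] that by blast
    qed
    have "\<xi> > 0" using xi x0 by simp
    hence "l = up t \<xi>" using uder xi(3) DERIV_unique by blast
    hence "l > up t 1" using updec \<open>\<xi> > 0\<close> xi(2) by blast
    hence "Du > up t 1" using ch xi(4) xl by simp
    hence "\<theta> t * Du > \<theta> t * up t 1" using th0 by simp
    hence "\<theta> t * Du > p t * c t + (d t + r t) * lam" using thup by linarith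
    thus False using st1 st2 m3 mus(1) by (simp add: algebra_simps)
  qed
  have z1: "z t \<noteq> 1"
  proof
    assume "z t = 1"
    hence "\<mu>1 t = 0" using cs(1) by simp
    moreover have "p t * c t > 0" using p0 c0 by simp
    moreover have "lam * r t \<ge> 0" using r0 lam0 by simp
    ultimately show False using st2 \<open>z t = 1\<close> x1 ep0 mus(2) by simp
  qed
  have m2: "\<mu>2 t = 0" using cs(2) x1 z1 by simp
  define K where "K = (p t * c t + r t * lam) / (\<beta> t * c t)"
  have wz: "(x t - z t) * c t \<ge> 0" using feas c0 by simp
  have Eeq: "ep t ((x t - z t) * c t) = K"
  proof (cases "z t = 0")
    case True
    have "\<beta> t * c t * ep t (c t) \<ge> p t * c t + r t * lam"
      using om(2) epc c0 by (simp add: pos_divide_le_eq mult.commute mult.left_commute)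
    hence "\<mu>1 t = 0" using st2 True x1 m2 mus(1) by (simp add: algebra_simps)
    then show ?thesis using st2 m2 be0 c0 by (simp add: K_def field_simps)
  next
    case False
    hence "\<mu>1 t = 0" using cs(1) by simp
    then show ?thesis using st2 m2 be0 c0 by (simp add: K_def field_simps)
  qed
  have inj: "inj_on (ep t) {0..}" using epmono strict_mono_on_imp_inj_on by blast
  have "the_inv_into {0..} (ep t) K = (x t - z t) * c t"
    using the_inv_into_f_f[OF inj] wz Eeq by force
  hence "a_fun (ep t) (c t) (p t) (r t) (\<beta> t) lam = 1 - z t"
    using c0 x1 unfolding a_fun_def K_def by simp
  thus ?thesis using x1 by (simp add: z_II_def)
qed

end
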